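(* For $n\ge4$, any two distinct chambers $\Delta_{\pi}\neq\Delta_{\pi'}$ of $\mathfrak S_n$ intersect (if at all) in a face of dimension at most $(n-3)(n-2)/2-1$; equivalently, for two distinct circular orderings $\pi,\pi'$ of $X$, at most $(n-3)(n-2)/2$ nontrivial splits are circular with respect to both $\pi$ and $\pi'$.
   Context: $X$ is a set of $n\ge4$ labels. A split of $X$ is an unordered partition of $X$ into two nonempty sets; it is trivial if one part is a singleton. A circular ordering of $X$ is a cyclic arrangement $\pi=(x_1,\dots,x_n)$ up to rotation and reflection; a split is circular w.r.t. $\pi$ if it has the form $\{\{x_{i+1},\dots,x_j\},X\setminus\{x_{i+1},\dots,x_j\}\}$ (indices mod $n$). Give $\mathbb R^\delta$, $\delta=2^{n-1}-n-1$, coordinates indexed by nontrivial splits. For each circular ordering $\pi$, the chamber $\Delta_\pi$ is the set of nonnegative vectors with coordinate sum $1$ supported on splits circular w.r.t. $\pi$ (a simplex of dimension $n(n-3)/2-1$), and $\mathfrak S_n=\bigcup_\pi\Delta_\pi$. *)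

theory Defs
  imports Main
begin

text \<open>A circular ordering of X is represented by a list enumerating X without repetition;
two lists represent the same circular ordering iff they differ by a rotation and/or reflection.\<close>

definition circular_ordering :: "'a set \<Rightarrow> 'a list \<Rightarrow> bool" where
  "circular_ordering X xs \<longleftrightarrow> distinct xs \<and> set xs = X"

definition same_circular_ordering :: "'a list \<Rightarrow> 'a list \<Rightarrow> bool" where
  "same_circular_ordering xs ys \<longleftrightarrow> (\<exists>r. ys = rotate r xs \<or> ys = rotate r (rev xs))"

definition split_of :: "'a set \<Rightarrow> 'a set set \<Rightarrow> bool" where
  "split_of X S \<longleftrightarrow> (\<exists>A. A \<subseteq> X \<and> A \<noteq> {} \<and> A \<noteq> X \<and> S = {A, X - A})"

definition nontrivial_split :: "'a set \<Rightarrow> 'a set set \<Rightarrow> bool" where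
  "nontrivial_split X S \<longleftrightarrow>
     split_of X S \<and> (\<forall>A\<in>S. card A \<ge> 2)"

text \<open>A split is circular w.r.t. the ordering xs if one part is a cyclic interval
 {x_(i+1),...,x_j}, i.e. a proper nonempty prefix of some rotation of xs.\<close>

definition circular_split :: "'a list \<Rightarrow> 'a set set \<Rightarrow> bool" where
  "circular_split xs S \<longleftrightarrow>
     (\<exists>r l. 0 < l \<and> l < length xs \<and>
        S = {set (take l (rotate r xs)), set xs - set (take l (rotate r xs))})"

end

theory Submission
  imports Defs
begin


definition seg :: "nat \<Rightarrow> nat \<Rightarrow> nat \<Rightarrow> nat \<Rightarrow> bool" where
  "seg n r l w \<longleftrightarrow> (if r \<le> w then w - r < l else w + n - r < l)"

definition Iv :: "'a list \<Rightarrow> nat \<Rightarrow> nat \<Rightarrow> 'a set" where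
  "Iv xs r l = {xs!w | w. w < length xs \<and> seg (length xs) r l w}"

definition isInt :: "'a list \<Rightarrow> 'a set \<Rightarrow> bool" where
  "isInt xs A \<longleftrightarrow> (\<exists>r l. r < length xs \<and> 0 < l \<and> l < length xs \<and> A = Iv xs r l)"

lemma mem_Iv:
  assumes "distinct xs" "w < length xs"
  shows "xs!w \<in> Iv xs r l \<longleftrightarrow> seg (length xs) r l w"
  using assms by (auto simp: Iv_def nth_eq_iff_index_eq)

lemma Iv_subset: "Iv xs r l \<subseteq> set xs"
  by (auto simp: Iv_def)

lemma mod_cases_aux:
  assumes "r < n" "t < (n::nat)"
  shows "(r + t) mod n = (if r + t < n then r + t else r + t - n)"
proof (cases "r + t < n")
  case True thus ?thesis by (simp add: mod_less)
next
  case False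
  hence "(r + t) mod n = (r + t - n) mod n" by (simp add: le_mod_geq)
  also have "\<dots> = r + t - n" using assms False by simp
  finally show ?thesis using False by simp
qed

lemma take_rotate_Iv:
  assumes "r < length xs" "l \<le> length xs"
  shows "set (take l (rotate r xs)) = Iv xs r l"
proof -
  let ?n = "length xs"
  have "y \<in> set (take l (rotate r xs)) \<longleftrightarrow> (\<exists>t<l. xs ! ((r+t) mod ?n) = y)" for y
    using assms by (auto simp: in_set_conv_nth nth_rotate)
  moreover have "(\<exists>t<l. xs ! ((r+t) mod ?n) = y) \<longleftrightarrow> (\<exists>w<?n. seg ?n r l w \<and> xs!w = y)" for y
  proof
    assume "\<exists>t<l. xs ! ((r+t) mod ?n) = y"
    then obtain t where t: "t < l" "xs ! ((r+t) mod ?n) = y" by blast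
    have tn: "t < ?n" using t assms by auto
    show "\<exists>w<?n. seg ?n r l w \<and> xs!w = y"
      apply (rule exI[of _ "(r+t) mod ?n"])
      using t tn assms by (auto simp: mod_cases_aux seg_def)
  next
    assume "\<exists>w<?n. seg ?n r l w \<and> xs!w = y"
    then obtain w where w: "w < ?n" "seg ?n r l w" "xs!w = y" by blast
    define t where "t = (if r \<le> w then w - r else w + ?n - r)"
    have "t < l" using w by (auto simp: t_def seg_def)
    moreover have "t < ?n" using w assms by (auto simp: t_def)
    moreover have "(r+t) mod ?n = w" using w assms \<open>t < ?n\<close>
      by (auto simp: t_def mod_cases_aux)
    ultimately show "\<exists>t<l. xs ! ((r+t) mod ?n) = y" using w by metis
  qed
  ultimately show ?thesis by (auto simp: Iv_def)
qed

lemma card_Iv: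
  assumes "distinct xs" "r < length xs" "l \<le> length xs"
  shows "card (Iv xs r l) = l"
proof -
  have "card (set (take l (rotate r xs))) = l"
    using assms by (simp add: distinct_card)
  thus ?thesis using take_rotate_Iv[OF assms(2,3)] by simp
qed

lemma circ_iff:
  assumes "xs \<noteq> []"
  shows "circular_split xs S \<longleftrightarrow> (\<exists>A. isInt xs A \<and> S = {A, set xs - A})"
proof
  assume "circular_split xs S"
  then obtain r l where rl: "0 < l" "l < length xs"
     "S = {set (take l (rotate r xs)), set xs - set (take l (rotate r xs))}"
    unfolding circular_split_def by blast
  have "rotate r xs = rotate (r mod length xs) xs" by (rule rotate_conv_mod)
  moreover have "r mod length xs < length xs" using assms by simp
  ultimately have "set (take l (rotate r xs)) = Iv xs (r mod length xs) l"
    using take_rotate_Iv rl by (metis less_imp_le)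
  thus "\<exists>A. isInt xs A \<and> S = {A, set xs - A}"
    using rl \<open>r mod length xs < length xs\<close> unfolding isInt_def by blast
next
  assume "\<exists>A. isInt xs A \<and> S = {A, set xs - A}"
  then obtain A r l where "r < length xs" "0 < l" "l < length xs" "A = Iv xs r l" "S = {A, set xs - A}"
    unfolding isInt_def by blast
  thus "circular_split xs S" unfolding circular_split_def
    using take_rotate_Iv by (metis less_imp_le)
qed

lemma seg_compl:
  assumes "r < n" "0 < l" "l < n" "w < n"
  shows "\<not> seg n r l w \<longleftrightarrow> seg n ((r+l) mod n) (n-l) w"
  using assms by (auto simp: seg_def mod_cases_aux)

lemma Iv_compl:
  assumes "distinct xs" "r < length xs" "0 < l" "l < length xs"
  shows "set xs - Iv xs r l = Iv xs ((r+l) mod length xs) (length xs - l)"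
proof -
  have "y \<in> set xs - Iv xs r l \<longleftrightarrow> y \<in> Iv xs ((r+l) mod length xs) (length xs - l)" for y
  proof (cases "y \<in> set xs")
    case True
    then obtain w where "w < length xs" "y = xs!w" by (auto simp: in_set_conv_nth)
    thus ?thesis using assms seg_compl[of r "length xs" l w] by (simp add: mem_Iv)
  next
    case False thus ?thesis using Iv_subset by (metis Diff_iff subsetD)
  qed
  thus ?thesis by blast
qed

lemma isInt_compl:
  assumes "distinct xs" "isInt xs A"
  shows "isInt xs (set xs - A)"
proof -
  obtain r l where rl: "r < length xs" "0 < l" "l < length xs" "A = Iv xs r l"
    using assms unfolding isInt_def by blast
  show ?thesis unfolding isInt_def
    apply (rule exI[of _ "(r+l) mod length xs"], rule exI[of _ "length xs - l"])
    using rl Iv_compl[OF assms(1) rl(1-3)] by (auto intro: mod_less_divisor)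
qed

lemma isInt_circ:
  assumes "distinct xs" "xs \<noteq> []"
  shows "isInt xs A \<longleftrightarrow> circular_split xs {A, set xs - A}"
proof
  assume "isInt xs A" thus "circular_split xs {A, set xs - A}" using circ_iff assms by blast
next
  assume "circular_split xs {A, set xs - A}"
  then obtain B where B: "isInt xs B" "{A, set xs - A} = {B, set xs - B}"
    using circ_iff assms by blast
  hence "A = B \<or> A = set xs - B" by (metis doubleton_eq_iff)
  thus "isInt xs A" using B isInt_compl assms by blast
qed

lemma circ_rotate:
  assumes "xs \<noteq> []"
  shows "circular_split (rotate k xs) S \<longleftrightarrow> circular_split xs S"
proof
  assume "circular_split (rotate k xs) S"
  then show "circular_split xs S" unfolding circular_split_def
    by (auto simp: rotate_rotate)
next
  assume "circular_split xs S"
  then obtain r l where rl: "0 < l" "l < length xs"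
     "S = {set (take l (rotate r xs)), set xs - set (take l (rotate r xs))}"
    unfolding circular_split_def by blast
  let ?n = "length xs"
  define r' where "r' = r + (?n - k mod ?n)"
  have np: "0 < ?n" using assms by simp
  have km: "k mod ?n < ?n" using np by simp
  have "r' + k = r + ?n + ?n * (k div ?n)"
  proof -
    have "k = k mod ?n + ?n * (k div ?n)" by simp
    thus ?thesis unfolding r'_def using km by linarith
  qed
  hence "(r' + k) mod ?n = (r + ?n) mod ?n" by (metis mod_mult_self2)
  hence "(r' + k) mod ?n = r mod ?n" by simp
  hence "rotate r' (rotate k xs) = rotate r xs"
    by (metis rotate_conv_mod rotate_rotate)
  thus "circular_split (rotate k xs) S" unfolding circular_split_def using rl
    by (metis length_rotate set_rotate)
qed

lemma isInt_rotate:
  assumes "distinct xs" "xs \<noteq> []"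
  shows "isInt (rotate k xs) A \<longleftrightarrow> isInt xs A"
proof -
  have "isInt (rotate k xs) A \<longleftrightarrow> circular_split (rotate k xs) {A, set xs - A}"
    using isInt_circ[of "rotate k xs"] assms by simp
  also have "\<dots> \<longleftrightarrow> circular_split xs {A, set xs - A}" using circ_rotate assms by blast
  also have "\<dots> \<longleftrightarrow> isInt xs A" using isInt_circ assms by blast
  finally show ?thesis .
qed



lemma seg_INT:
  assumes "r < n" "u < v" "v < n" "seg n r l u" "seg n r l v"
  shows "(\<forall>w. u \<le> w \<and> w \<le> v \<longrightarrow> seg n r l w) \<or> (\<forall>w<n. (w \<le> u \<or> v \<le> w) \<longrightarrow> seg n r l w)"
proof (cases "r \<le> u")
  case True
  have "\<forall>w. u \<le> w \<and> w \<le> v \<longrightarrow> seg n r l w"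
  proof (intro allI impI)
    fix w assume "u \<le> w \<and> w \<le> v"
    thus "seg n r l w" using assms True unfolding seg_def by (simp split: if_splits; arith)
  qed
  thus ?thesis ..
next
  case False
  show ?thesis
  proof (cases "r \<le> v")
    case True
    have "\<forall>w<n. (w \<le> u \<or> v \<le> w) \<longrightarrow> seg n r l w"
    proof (intro allI impI)
      fix w assume "w < n" "w \<le> u \<or> v \<le> w"
      thus "seg n r l w" using assms True False unfolding seg_def by (simp split: if_splits; arith)
    qed
    thus ?thesis ..
  next
    case False2: False
    have "\<forall>w. u \<le> w \<and> w \<le> v \<longrightarrow> seg n r l w"
    proof (intro allI impI)
      fix w assume "u \<le> w \<and> w \<le> v"
      thus "seg n r l w" using assms False2 False unfolding seg_def by (simp split: if_splits; arith)
    qed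
    thus ?thesis ..
  qed
qed

lemma INT:
  assumes "distinct xs" "isInt xs A" "u < v" "v < length xs" "xs!u \<in> A" "xs!v \<in> A"
  shows "(\<forall>w. u \<le> w \<and> w \<le> v \<longrightarrow> xs!w \<in> A) \<or> (\<forall>w<length xs. (w \<le> u \<or> v \<le> w) \<longrightarrow> xs!w \<in> A)"
proof -
  obtain r l where rl: "r < length xs" "0 < l" "l < length xs" "A = Iv xs r l"
    using assms unfolding isInt_def by blast
  have m: "w < length xs \<Longrightarrow> xs!w \<in> A \<longleftrightarrow> seg (length xs) r l w" for w
    using rl mem_Iv assms(1) by blast
  have "seg (length xs) r l u" "seg (length xs) r l v" using assms m by auto
  from seg_INT[OF rl(1) assms(3,4) this] show ?thesis
    using m assms by (metis le_less_trans)
qed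

lemma suc_mod: "w < (n::nat) \<Longrightarrow> (w+1) mod n = (if w + 1 < n then w + 1 else 0)"
proof (cases "w + 1 < n")
  case False
  assume "w < n"
  hence "w + 1 = n" using False by simp
  thus ?thesis by simp
qed simp

lemma seg2:
  assumes "w < n" "w' < n" "2 < n"
  shows "seg n w 2 w' \<longleftrightarrow> w' = w \<or> w' = (w+1) mod n"
  unfolding seg_def suc_mod[OF assms(1)] using assms by (simp split: if_splits; arith)

lemma Iv2:
  assumes "distinct xs" "w < length xs" "2 < length xs"
  shows "Iv xs w 2 = {xs!w, xs!((w+1) mod length xs)}"
proof -
  have "(w+1) mod length xs < length xs" using assms by (intro mod_less_divisor) auto
  thus ?thesis using assms seg2[OF assms(2) _ assms(3)] unfolding Iv_def by auto
qed

lemma isInt_adj: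
  assumes "distinct xs" "w < length xs" "2 < length xs"
  shows "isInt xs {xs!w, xs!((w+1) mod length xs)}"
  unfolding isInt_def using Iv2[OF assms] assms by (metis zero_less_numeral)

lemma pred_mod: assumes "r < (n::nat)" shows "((r+1) mod n + n - 1) mod n = r"
proof (cases "r + 1 < n")
  case True
  hence "(r+1) mod n + n - 1 = r + n" by simp
  thus ?thesis using assms by simp
next
  case False
  hence "r + 1 = n" using assms by simp
  thus ?thesis by simp
qed
lemma adj:
  assumes d: "distinct xs" and n3: "2 < length xs" and I: "isInt xs {u,v}" and uv: "u \<noteq> v"
    and w: "w < length xs" "u = xs!w"
  shows "v = xs!((w+1) mod length xs) \<or> v = xs!((w + length xs - 1) mod length xs)"
proof -
  let ?n = "length xs"
  obtain r l where rl: "r < ?n" "0 < l" "l < ?n" "{u,v} = Iv xs r l"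
    using I unfolding isInt_def by blast
  have "card (Iv xs r l) = l" using card_Iv[OF d rl(1)] rl(3) by simp
  moreover have "card {u,v} = 2" using uv by simp
  ultimately have l2: "l = 2" using rl(4) by simp
  have vs: "v \<in> set xs" using rl(4) Iv_subset[of xs r l] by blast
  then obtain w' where w': "w' < ?n" "v = xs!w'" by (auto simp: in_set_conv_nth)
  have ww: "w \<noteq> w'" using uv w w' by auto
  have uI: "xs!w \<in> Iv xs r 2" using rl(4) l2 w by blast
  have vI: "xs!w' \<in> Iv xs r 2" using rl(4) l2 w' by blast
  have s1: "seg ?n r 2 w" using mem_Iv[OF d w(1)] uI by blast
  have s2: "seg ?n r 2 w'" using mem_Iv[OF d w'(1)] vI by blast
  have e1: "w = r \<or> w = (r+1) mod ?n" using seg2[OF rl(1) w(1) n3] s1 by blast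
  have e2: "w' = r \<or> w' = (r+1) mod ?n" using seg2[OF rl(1) w'(1) n3] s2 by blast
  show ?thesis
  proof (cases "w = r")
    case True
    hence "w' = (r+1) mod ?n" using e2 ww by blast
    thus ?thesis using w' True by simp
  next
    case False
    hence "w = (r+1) mod ?n" "w' = r" using e1 e2 ww by blast+
    hence "(w + ?n - 1) mod ?n = w'" using pred_mod[OF rl(1)] by simp
    thus ?thesis using w' by simp
  qed
qed



lemma key:
  assumes d: "distinct q" and n: "length q = n" and m: "3 \<le> m" "m + 2 \<le> n"
    and M: "M = {q!w | w. w < m}"
    and x: "x \<in> M" and b: "b \<in> M" "x \<noteq> b" and a: "a \<in> set q" "a \<notin> M"
    and I1: "isInt q (M - {x})" and I2: "isInt q (M - {b} \<union> {a})" and na: "\<not> isInt q {x,a}"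
  shows False
proof -
  have eq: "w < n \<Longrightarrow> w' < n \<Longrightarrow> q!w = q!w' \<longleftrightarrow> w = w'" for w w'
    using d n by (simp add: nth_eq_iff_index_eq)
  have Mmem: "w < n \<Longrightarrow> q!w \<in> M \<longleftrightarrow> w < m" for w
    using M eq m by auto
  obtain wx where wx: "wx < m" "x = q!wx" using x M by auto
  obtain t where t: "t < m" "b = q!t" using b M by auto
  have twx: "t \<noteq> wx" using t wx b by auto
  obtain s where s: "s < n" "a = q!s" using a n by (auto simp: in_set_conv_nth)
  have sm: "m \<le> s" using s a Mmem by (meson not_le)
  let ?N = "M - {b} \<union> {a}"
  have Nmem: "w < n \<Longrightarrow> q!w \<in> ?N \<longleftrightarrow> (w < m \<and> w \<noteq> t) \<or> w = s" for w
    using Mmem eq t s m by auto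
  have X1: "w < n \<Longrightarrow> q!w \<in> M - {x} \<longleftrightarrow> (w < m \<and> w \<noteq> wx)" for w
    using Mmem eq wx m by auto
  have wx01: "wx = 0 \<or> wx = m - 1"
  proof (rule ccontr)
    assume c: "\<not> (wx = 0 \<or> wx = m - 1)"
    have "q!0 \<in> M - {x}" "q!(m-1) \<in> M - {x}" using X1 c m by auto
    from INT[OF d I1 _ _ this] m n
    have "(\<forall>w. 0 \<le> w \<and> w \<le> m - 1 \<longrightarrow> q!w \<in> M - {x}) \<or> (\<forall>w<n. (w \<le> 0 \<or> m - 1 \<le> w) \<longrightarrow> q!w \<in> M - {x})"
      by auto
    thus False
    proof
      assume "\<forall>w. 0 \<le> w \<and> w \<le> m - 1 \<longrightarrow> q!w \<in> M - {x}"
      moreover have "0 \<le> wx \<and> wx \<le> m - 1" using wx by simp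
      ultimately have "q!wx \<in> M - {x}" by blast
      thus False using wx by auto
    next
      assume "\<forall>w<n. (w \<le> 0 \<or> m - 1 \<le> w) \<longrightarrow> q!w \<in> M - {x}"
      moreover have "m < n \<and> (m \<le> 0 \<or> m - 1 \<le> m)" using m by simp
      ultimately have "q!m \<in> M - {x}" by blast
      moreover have "m < n" using m by simp
      ultimately have "m < m \<and> m \<noteq> wx" using X1 by blast
      thus False by simp
    qed
  qed
  have n3: "2 < length q" using n m by auto
  show False
  proof (cases "wx = 0")
    case True
    have sn: "s \<noteq> n - 1"
    proof
      assume "s = n - 1"
      have lt: "n-1 < length q" using n m by simp
      have "isInt q {q!(n-1), q!((n-1+1) mod length q)}" using isInt_adj[OF d lt n3] .
      moreover have "(n-1+1) mod length q = 0" using n m by simp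
      ultimately have "isInt q {q!(n-1), q!0}" by simp
      hence "isInt q {x,a}" using True wx s \<open>s = n - 1\<close> by (simp add: insert_commute)
      thus False using na by simp
    qed
    have "q!0 \<in> ?N" "q!s \<in> ?N" using Nmem True twx m s by auto
    from INT[OF d I2 _ _ this] m n sm s
    have "(\<forall>w. 0 \<le> w \<and> w \<le> s \<longrightarrow> q!w \<in> ?N) \<or> (\<forall>w<n. (w \<le> 0 \<or> s \<le> w) \<longrightarrow> q!w \<in> ?N)"
      by auto
    thus False
    proof
      assume "\<forall>w. 0 \<le> w \<and> w \<le> s \<longrightarrow> q!w \<in> ?N"
      moreover have "0 \<le> t \<and> t \<le> s" using t sm by simp
      ultimately have "q!t \<in> ?N" by blast
      moreover have "t < n" using t m n by simp
      ultimately have "(t < m \<and> t \<noteq> t) \<or> t = s" using Nmem by blast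
      thus False using t sm by simp
    next
      assume "\<forall>w<n. (w \<le> 0 \<or> s \<le> w) \<longrightarrow> q!w \<in> ?N"
      moreover have "n - 1 < n \<and> (n - 1 \<le> 0 \<or> s \<le> n - 1)" using s m by simp
      ultimately have "q!(n-1) \<in> ?N" by blast
      moreover have "n - 1 < n" using m by simp
      ultimately have "(n - 1 < m \<and> n - 1 \<noteq> t) \<or> n - 1 = s" using Nmem by blast
      thus False using sn m by arith
    qed
  next
    case False
    hence wm: "wx = m - 1" using wx01 by simp
    have sn: "s \<noteq> m"
    proof
      assume "s = m"
      have lt: "m-1 < length q" using n m by simp
      have "isInt q {q!(m-1), q!((m-1+1) mod length q)}" using isInt_adj[OF d lt n3] .
      moreover have "(m-1+1) mod length q = m" using n m by simp
      ultimately have "isInt q {q!(m-1), q!m}" by simp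
      hence "isInt q {x,a}" using wm wx s \<open>s = m\<close> by simp
      thus False using na by simp
    qed
    have tm: "t < m - 1" using t twx wm by auto
    have "q!(m-1) \<in> ?N" "q!s \<in> ?N" using Nmem wm twx m s by auto
    from INT[OF d I2 _ _ this] m n sm s
    have "(\<forall>w. m - 1 \<le> w \<and> w \<le> s \<longrightarrow> q!w \<in> ?N) \<or> (\<forall>w<n. (w \<le> m - 1 \<or> s \<le> w) \<longrightarrow> q!w \<in> ?N)"
      by auto
    thus False
    proof
      assume "\<forall>w. m - 1 \<le> w \<and> w \<le> s \<longrightarrow> q!w \<in> ?N"
      moreover have "m - 1 \<le> m \<and> m \<le> s" using sm by simp
      ultimately have "q!m \<in> ?N" by blast
      moreover have "m < n" using m n by simp
      ultimately have "(m < m \<and> m \<noteq> t) \<or> m = s" using Nmem by blast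
      thus False using sn by simp
    next
      assume "\<forall>w<n. (w \<le> m - 1 \<or> s \<le> w) \<longrightarrow> q!w \<in> ?N"
      moreover have "t < n \<and> (t \<le> m - 1 \<or> s \<le> t)" using tm t m n by simp
      ultimately have "q!t \<in> ?N" by blast
      moreover have "t < n" using t m n by simp
      ultimately have "(t < m \<and> t \<noteq> t) \<or> t = s" using Nmem by blast
      thus False using t sm by simp
    qed
  qed
qed



lemma rot_back:
  assumes "xs \<noteq> []"
  shows "rotate (length xs - k mod length xs) (rotate k xs) = xs"
proof -
  let ?n = "length xs"
  have km: "k mod ?n < ?n" using assms by simp
  have k: "k = k mod ?n + ?n * (k div ?n)" by simp
  have "length xs - k mod length xs + k = ?n + ?n * (k div ?n)" using km k by linarith
  hence "(length xs - k mod length xs + k) mod ?n = 0" by simp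
  thus ?thesis by (simp add: rotate_rotate)
qed

lemma recon:
  assumes dp: "distinct p" and dq: "distinct q" and st: "set p = set q"
    and lp: "length p = n" and lq: "length q = n" and n3: "3 \<le> n"
    and all: "\<forall>i<n. isInt q {p!i, p!((i+1) mod n)}"
  shows "same_circular_ordering p q"
proof -
  have qne: "q \<noteq> []" using lq n3 by auto
  have "p!0 \<in> set q" using st lp n3 by (metis nth_mem less_le_trans zero_less_numeral)
  then obtain k where k: "k < n" "q!k = p!0" using lq by (auto simp: in_set_conv_nth)
  define q' where "q' = rotate k q"
  have dq': "distinct q'" using dq q'_def by simp
  have lq': "length q' = n" using lq q'_def by simp
  have q'0: "q'!0 = p!0" using k lq q'_def n3 by (simp add: nth_rotate)
  have all': "isInt q' {p!i, p!((i+1) mod n)}" if "i < n" for i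
    using all that isInt_rotate[OF dq qne] q'_def by simp
  have pne: "i < n \<Longrightarrow> j < n \<Longrightarrow> p!i = p!j \<longleftrightarrow> i = j" for i j
    using dp lp by (simp add: nth_eq_iff_index_eq)
  have step: "p!(t+1) = q'!((w+1) mod n) \<or> p!(t+1) = q'!((w+n-1) mod n)"
    if "t+1 < n" "w < n" "p!t = q'!w" for t w
  proof -
    have tn: "t < n" using that(1) by simp
    have "isInt q' {p!t, p!((t+1) mod n)}" by (rule all'[OF tn])
    moreover have "(t+1) mod n = t+1" using that(1) by simp
    ultimately have I: "isInt q' {p!t, p!(t+1)}" by simp
    have ne: "p!t \<noteq> p!(t+1)" using pne[of t "t+1"] that(1) by simp
    show ?thesis using adj[OF dq' _ I ne, of w] lq' n3 that by simp
  qed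
  have "p!1 = q'!((0+1) mod n) \<or> p!1 = q'!((0+n-1) mod n)"
    using step[of 0 0] q'0 n3 by simp
  hence cases1: "p!1 = q'!1 \<or> p!1 = q'!(n-1)" using n3 by simp
  show ?thesis
  proof (cases "p!1 = q'!1")
    case True
    have "(t < n \<longrightarrow> p!t = q'!t) \<and> (Suc t < n \<longrightarrow> p!(Suc t) = q'!(Suc t))" for t
    proof (induction t)
      case 0 thus ?case using q'0 True by simp
    next
      case (Suc t)
      have "Suc (Suc t) < n \<Longrightarrow> p!(Suc (Suc t)) = q'!(Suc (Suc t))"
      proof -
        assume a: "Suc (Suc t) < n"
        have e: "p!(Suc t) = q'!(Suc t)" using Suc a by simp
        have "p!(Suc t+1) = q'!((Suc t+1) mod n) \<or> p!(Suc t+1) = q'!((Suc t+n-1) mod n)"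
          using step[of "Suc t" "Suc t"] a e by simp
        moreover have "(Suc t+1) mod n = Suc (Suc t)" using a by simp
        moreover have "(Suc t+n-1) mod n = t" using a by simp
        moreover have "p!t = q'!t" using Suc a by simp
        moreover have "p!(Suc (Suc t)) \<noteq> p!t" using pne a by simp
        ultimately show ?thesis by simp
      qed
      thus ?case using Suc by simp
    qed
    hence "p = q'" using lp lq' by (intro nth_equalityI) auto
    hence "q = rotate (n - k mod n) p" using rot_back[OF qne, of k] q'_def lq by simp
    thus ?thesis unfolding same_circular_ordering_def by blast
  next
    case False
    hence p1: "p!1 = q'!(n-1)" using cases1 by simp
    have "(t < n \<longrightarrow> p!t = q'!((n - t) mod n)) \<and> (Suc t < n \<longrightarrow> p!(Suc t) = q'!(n - Suc t))" for t
    proof (induction t)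
      case 0 thus ?case using q'0 p1 by simp
    next
      case (Suc t)
      have "Suc (Suc t) < n \<Longrightarrow> p!(Suc (Suc t)) = q'!(n - Suc (Suc t))"
      proof -
        assume a: "Suc (Suc t) < n"
        have e: "p!(Suc t) = q'!(n - Suc t)" using Suc a by simp
        have "p!(Suc t+1) = q'!((n - Suc t+1) mod n) \<or> p!(Suc t+1) = q'!((n - Suc t+n-1) mod n)"
          using step[of "Suc t" "n - Suc t"] a e by simp
        moreover have "(n - Suc t+1) mod n = (n - t) mod n"
        proof -
          have "n - Suc t + 1 = n - t" using a by simp
          thus ?thesis by simp
        qed
        moreover have "(n - Suc t+n-1) mod n = n - Suc (Suc t)"
        proof -
          have e: "n - Suc t+n-1 = (n - Suc (Suc t)) + n" using a by simp
          have lt: "n - Suc (Suc t) < n" using a by simp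
          have "((n - Suc (Suc t)) + n) mod n = (n - Suc (Suc t)) mod n" by (rule mod_add_self2)
          also have "\<dots> = n - Suc (Suc t)" using lt by (rule mod_less)
          finally have "((n - Suc (Suc t)) + n) mod n = n - Suc (Suc t)" .
          thus ?thesis unfolding e .
        qed
        moreover have "p!t = q'!((n - t) mod n)" using Suc a by simp
        moreover have "p!(Suc (Suc t)) \<noteq> p!t" using pne a by simp
        ultimately show ?thesis by simp
      qed
      moreover have "Suc t < n \<Longrightarrow> p!(Suc t) = q'!((n - Suc t) mod n)" using Suc by simp
      ultimately show ?case by simp
    qed
    hence pt: "t < n \<Longrightarrow> p!t = q'!((n - t) mod n)" for t by blast
    have "rev p = rotate 1 q'"
    proof (rule nth_equalityI)
      show "length (rev p) = length (rotate 1 q')" using lp lq' by simp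
    next
      fix s assume "s < length (rev p)"
      hence s: "s < n" using lp by simp
      have "rev p ! s = p!(n - Suc s)" using s lp by (simp add: rev_nth)
      also have "\<dots> = q'!((n - (n - Suc s)) mod n)" using pt s by simp
      also have "(n - (n - Suc s)) = 1 + s" using s by simp
      also have "q'!((1 + s) mod n) = rotate 1 q' ! s" using s lq' nth_rotate1[of s q'] by simp
      finally show "rev p ! s = rotate 1 q' ! s" .
    qed
    hence "rev p = rotate (1 + k) q" using q'_def by (simp add: rotate_rotate)
    hence "q = rotate (n - (1+k) mod n) (rev p)" using rot_back[OF qne, of "1+k"] lq by simp
    thus ?thesis unfolding same_circular_ordering_def by blast
  qed
qed

lemma cardT: "2 * card {(i,j). 1 \<le> i \<and> i+2 \<le> j \<and> j \<le> (m::nat)} = (m-2)*(m-1)"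
proof (induction m)
  case 0
  have e: "{(i,j). 1 \<le> i \<and> i+2 \<le> j \<and> j \<le> (0::nat)} = {}" by auto
  show ?case unfolding e by simp
next
  case (Suc m)
  let ?T = "\<lambda>m. {(i,j). 1 \<le> i \<and> i+2 \<le> j \<and> j \<le> (m::nat)}"
  have eq: "?T (Suc m) = ?T m \<union> (\<lambda>i. (i, Suc m)) ` {1..m-1}" by auto
  have fin: "finite (?T m)"
    by (rule finite_subset[of _ "{0..m} \<times> {0..m}"]) auto
  have disj: "?T m \<inter> (\<lambda>i. (i, Suc m)) ` {1..m-1} = {}" by auto
  have c2: "card ((\<lambda>i. (i, Suc m)) ` {1..m-1}) = m - 1"
    by (subst card_image) (auto simp: inj_on_def)
  have "card (?T (Suc m)) = card (?T m) + (m - 1)"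
    unfolding eq using fin disj c2 by (simp add: card_Un_disjoint)
  hence "2 * card (?T (Suc m)) = (m-2)*(m-1) + 2*(m-1)" using Suc by simp
  also have "\<dots> = (Suc m - 2) * (Suc m - 1)"
    by (cases m; cases "m - 1"; simp add: algebra_simps)
  finally show ?case .
qed



definition Ic :: "'a list \<Rightarrow> (nat \<Rightarrow> bool) \<Rightarrow> 'a set" where
  "Ic c P = {c!w | w. w < length c \<and> P w}"

lemma Ic_mem:
  assumes "distinct c" "w < length c"
  shows "c!w \<in> Ic c P \<longleftrightarrow> P w"
  using assms by (auto simp: Ic_def nth_eq_iff_index_eq)

lemma Ic_diff: "distinct c \<Longrightarrow> Ic c P - Ic c Q = Ic c (\<lambda>w. P w \<and> \<not> Q w)"
  by (auto simp: Ic_def nth_eq_iff_index_eq)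

lemma Ic_un: "Ic c P \<union> Ic c Q = Ic c (\<lambda>w. P w \<or> Q w)"
  by (auto simp: Ic_def)

lemma Ic_single: "k < length c \<Longrightarrow> {c!k} = Ic c (\<lambda>w. w = k)"
  by (auto simp: Ic_def)

lemma Ic_cong: "(\<And>w. w < length c \<Longrightarrow> P w = Q w) \<Longrightarrow> Ic c P = Ic c Q"
  by (auto simp: Ic_def)

lemma Ic_all: "set c = Ic c (\<lambda>w. True)"
  by (auto simp: Ic_def in_set_conv_nth)

lemma Iv_Ic: "Iv c r l = Ic c (seg (length c) r l)"
  by (simp add: Iv_def Ic_def)

lemma card_Ic_int:
  assumes "distinct c" "j \<le> length c"
  shows "card (Ic c (\<lambda>w. i \<le> w \<and> w < j)) = j - i"
proof -
  have "Ic c (\<lambda>w. i \<le> w \<and> w < j) = (\<lambda>w. c!w) ` {i..<j}"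
    using assms by (auto simp: Ic_def)
  moreover have "inj_on (\<lambda>w. c!w) {i..<j}"
    using assms by (auto simp: inj_on_def nth_eq_iff_index_eq)
  ultimately show ?thesis by (simp add: card_image)
qed

lemma take_nth_set:
  assumes "j \<le> length ys" shows "set (take j ys) = {ys!w | w. w < j}"
proof (intro set_eqI iffI)
  fix y assume "y \<in> set (take j ys)"
  then obtain i where "i < length (take j ys)" "take j ys ! i = y" by (auto simp: in_set_conv_nth)
  thus "y \<in> {ys!w | w. w < j}" using assms by auto
next
  fix y assume "y \<in> {ys!w | w. w < j}"
  then obtain w where w: "w < j" "y = ys!w" by auto
  hence "take j ys ! w = y" "w < length (take j ys)" using assms by auto
  thus "y \<in> set (take j ys)" by (metis nth_mem)
qed

theorem theorem9:
  fixes X :: "'a set" and p q :: "'a list"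
  assumes "finite X" and "card X \<ge> 4"
    and "circular_ordering X p" and "circular_ordering X q"
    and "\<not> same_circular_ordering p q"
  shows "2 * card {S. nontrivial_split X S \<and> circular_split p S \<and> circular_split q S}
           \<le> (card X - 3) * (card X - 2)"
proof -
  define n where "n = card X"
  have dp: "distinct p" "set p = X" using assms(3) by (auto simp: circular_ordering_def)
  have dq: "distinct q" "set q = X" using assms(4) by (auto simp: circular_ordering_def)
  have lp: "length p = n" using dp n_def distinct_card by metis
  have lq: "length q = n" using dq n_def distinct_card by metis
  have n4: "4 \<le> n" using assms(2) n_def by simp
  have pne: "p \<noteq> []" and qne: "q \<noteq> []" using lp lq n4 by auto
  have "\<exists>i<n. \<not> isInt q {p!i, p!((i+1) mod n)}"
  proof (rule ccontr)
    assume "\<not> (\<exists>i<n. \<not> isInt q {p!i, p!((i+1) mod n)})"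
    hence "\<forall>i<n. isInt q {p!i, p!((i+1) mod n)}" by blast
    hence "same_circular_ordering p q"
      using recon[OF dp(1) dq(1) _ lp lq] dp dq n4 by simp
    thus False using assms(5) by simp
  qed
  then obtain i where i: "i < n" "\<not> isInt q {p!i, p!((i+1) mod n)}" by blast
  define c where "c = rotate (Suc i) p"
  have dc: "distinct c" "set c = X" "length c = n" using dp lp c_def by auto
  have c0: "c!0 = p!((i+1) mod n)" using c_def lp n4 nth_rotate[of 0 p "Suc i"] by simp
  have "c!(n-1) = p!((Suc i + (n-1)) mod n)" using c_def lp n4 nth_rotate[of "n-1" p "Suc i"] by simp
  moreover have "(Suc i + (n-1)) mod n = i" using i n4
  proof -
    have "Suc i + (n-1) = i + n" using n4 by simp
    thus ?thesis using i by simp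
  qed
  ultimately have cn: "c!(n-1) = p!i" by simp
  define x where "x = c!0"
  define a where "a = c!(n-1)"
  have na: "\<not> isInt q {x, a}" using i(2) c0 cn x_def a_def by (simp add: insert_commute)
  define L where "L = (\<lambda>i j. Ic c (\<lambda>w. i \<le> w \<and> w < j))"
  define U where "U = {(i,j). i+2 \<le> j \<and> j \<le> n-1 \<and> j - i \<le> n-2 \<and> isInt q (L i j)}"
  define T where "T = {(i,j). 1 \<le> i \<and> i+2 \<le> j \<and> j \<le> n-1}"
  define sp where "sp = (\<lambda>(i,j). {L i j, X - L i j})"
  define CS where "CS = {S. nontrivial_split X S \<and> circular_split p S \<and> circular_split q S}"
  have finU: "finite U"
    by (rule finite_subset[of _ "{0..n} \<times> {0..n}"]) (auto simp: U_def)
  have finT: "finite T"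
    by (rule finite_subset[of _ "{0..n} \<times> {0..n}"]) (auto simp: T_def)
  have Xc: "X = Ic c (\<lambda>w. True)" using Ic_all dc by metis
  have isIntq_compl: "isInt q B \<Longrightarrow> isInt q (X - B)" for B using isInt_compl[OF dq(1)] dq by simp
  have Lsub: "L i j \<subseteq> X" for i j using dc by (auto simp: L_def Ic_def)
  have sub: "CS \<subseteq> sp ` U"
  proof
    fix S assume "S \<in> CS"
    hence nt: "nontrivial_split X S" and cp: "circular_split p S" and cq: "circular_split q S"
      by (auto simp: CS_def)
    have cc: "circular_split c S" unfolding c_def using cp circ_rotate[OF pne, of "Suc i" S] by blast
    obtain A where A: "isInt c A" "S = {A, X - A}" using cc circ_iff[of c S] dc pne c_def by auto
    have AX: "A \<subseteq> X"
    proof -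
      obtain r l where "A = Iv c r l" using A(1) unfolding isInt_def by blast
      thus ?thesis using Iv_subset[of c r l] dc by simp
    qed
    obtain B where B: "isInt c B" "c!(n-1) \<notin> B" "S = {B, X - B}"
    proof (cases "c!(n-1) \<in> A")
      case True
      have "isInt c (X - A)" using isInt_compl[OF dc(1) A(1)] dc by simp
      moreover have "c!(n-1) \<notin> X - A" using True by simp
      moreover have "S = {X - A, X - (X - A)}" using A AX by (simp add: double_diff insert_commute)
      ultimately show ?thesis using that by blast
    next
      case False thus ?thesis using that A by blast
    qed
    obtain r l where rl: "r < n" "0 < l" "l < n" "B = Iv c r l" using B(1) dc unfolding isInt_def by auto
    have BIc: "B = Ic c (seg n r l)" using rl(4) Iv_Ic[of c r l] dc(3) by simp
    have "\<not> seg n r l (n-1)" using B(2) BIc Ic_mem[OF dc(1)] dc n4 by auto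
    hence rln: "r + l \<le> n - 1" using rl by (auto simp: seg_def split: if_splits)
    have "B = L r (r+l)" unfolding BIc L_def
      by (rule Ic_cong) (use rl rln dc in \<open>auto simp: seg_def\<close>)
    have cB: "card B = l" using card_Iv[OF dc(1)] rl dc by simp
    have cXB: "card (X - B) = n - l"
    proof -
      have BX: "B \<subseteq> X" using Lsub \<open>B = L r (r+l)\<close> by simp
      have "finite B" using BX assms(1) by (rule finite_subset)
      hence "card (X - B) = card X - card B" using BX by (rule card_Diff_subset)
      thus ?thesis using cB n_def by simp
    qed
    have "\<forall>A\<in>S. card A \<ge> 2" using nt unfolding nontrivial_split_def by blast
    hence l2: "2 \<le> l" "2 \<le> n - l" using B(3) cB cXB by auto
    obtain A' where A': "isInt q A'" "S = {A', X - A'}" using cq circ_iff[of q S] dq qne by auto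
    have "B = A' \<or> B = X - A'" using A'(2) B(3) by (metis doubleton_eq_iff)
    hence "isInt q B"
    proof
      assume "B = A'" thus ?thesis using A' by simp
    next
      assume "B = X - A'" thus ?thesis using isIntq_compl A' by simp
    qed
    hence "(r, r+l) \<in> U" using l2 rln \<open>B = L r (r+l)\<close> unfolding U_def by auto
    moreover have "S = sp (r, r+l)" using B(3) \<open>B = L r (r+l)\<close> sp_def by simp
    ultimately show "S \<in> sp ` U" by blast
  qed
  have c1: "card CS \<le> card U"
    using card_mono[OF finite_imageI[OF finU] sub] card_image_le[OF finU, of sp] by linarith
  have F: "3 \<le> j \<and> \<not> isInt q (L 1 j)" if u: "(0,j) \<in> U" and h: "isInt q (L (j-1) (n-1))" for j
  proof -
    have j: "2 \<le> j" "j \<le> n - 2" and I0: "isInt q (L 0 j)" using u unfolding U_def by auto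
    have j3: "3 \<le> j"
    proof (rule ccontr)
      assume "\<not> 3 \<le> j"
      hence "j = 2" using j by simp
      hence "isInt q (X - L 1 (n-1))" using isIntq_compl h by simp
      moreover have "X - L 1 (n-1) = {x, a}"
      proof -
        have "X - L 1 (n-1) = Ic c (\<lambda>w. \<not> (1 \<le> w \<and> w < n - 1))"
          unfolding Xc L_def by (simp add: Ic_diff[OF dc(1)])
        also have "\<dots> = Ic c (\<lambda>w. w = 0 \<or> w = n - 1)"
          by (rule Ic_cong) (use dc in auto)
        also have "\<dots> = {x, a}" unfolding x_def a_def Ic_def
          using dc n4 by auto
        finally show ?thesis .
      qed
      ultimately show False using na by simp
    qed
    have "\<not> isInt q (L 1 j)"
    proof
      assume I1: "isInt q (L 1 j)"
      obtain r l where rl: "r < n" "0 < l" "l < n" "L 0 j = Iv q r l" using I0 lq unfolding isInt_def by auto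
      have "card (L 0 j) = j - 0" unfolding L_def using j dc by (intro card_Ic_int[OF dc(1)]) simp
      hence "card (L 0 j) = j" by simp
      hence lj: "l = j" using card_Iv[OF dq(1)] rl lq by simp
      define q2 where "q2 = rotate r q"
      have dq2: "distinct q2" "length q2 = n" "set q2 = X" using dq lq q2_def by auto
      have q2I: "isInt q2 B \<longleftrightarrow> isInt q B" for B using isInt_rotate[OF dq(1) qne] q2_def by simp
      have M: "L 0 j = {q2!w | w. w < j}"
        using take_rotate_Iv[of r q j] take_nth_set[of j q2] rl lj lq q2_def j by simp
      have jn: "j < n" using j n4 by simp
      have xM: "x \<in> L 0 j" unfolding x_def L_def using Ic_mem[OF dc(1)] dc j n4 by simp
      have bM: "c!(j-1) \<in> L 0 j" unfolding L_def using Ic_mem[OF dc(1)] dc j n4 by simp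
      have xb: "x \<noteq> c!(j-1)" unfolding x_def using dc j3 jn by (simp add: nth_eq_iff_index_eq)
      have aX: "a \<in> set q2" unfolding a_def using dq2 dc n4 by (metis diff_less nth_mem zero_less_one less_le_trans zero_less_numeral)
      have aM: "a \<notin> L 0 j" unfolding a_def L_def using Ic_mem[OF dc(1)] dc j n4 by simp
      have e1: "L 0 j - {x} = L 1 j"
      proof -
        have "L 0 j - {x} = Ic c (\<lambda>w. (0 \<le> w \<and> w < j) \<and> \<not> w = 0)"
          unfolding L_def x_def using Ic_single[of 0 c] dc n4 Ic_diff[OF dc(1)] by simp
        also have "\<dots> = L 1 j" unfolding L_def by (rule Ic_cong) auto
        finally show ?thesis .
      qed
      have e2: "L 0 j - {c!(j-1)} \<union> {a} = X - L (j-1) (n-1)"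
      proof -
        have "L 0 j - {c!(j-1)} \<union> {a} = Ic c (\<lambda>w. ((0 \<le> w \<and> w < j) \<and> \<not> w = j - 1) \<or> w = n - 1)"
          unfolding L_def a_def using Ic_single[of "j-1" c] Ic_single[of "n-1" c] dc n4 jn
            Ic_diff[OF dc(1)] Ic_un[of c] by simp
        also have "\<dots> = Ic c (\<lambda>w. True \<and> \<not> (j - 1 \<le> w \<and> w < n - 1))"
          by (rule Ic_cong) (use dc j3 jn in auto)
        also have "\<dots> = X - L (j-1) (n-1)" unfolding Xc L_def by (simp add: Ic_diff[OF dc(1)])
        finally show ?thesis .
      qed
      have I1': "isInt q2 (L 0 j - {x})" using I1 e1 q2I by simp
      have I2': "isInt q2 (L 0 j - {c!(j-1)} \<union> {a})" using e2 q2I isIntq_compl h by simp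
      have na': "\<not> isInt q2 {x, a}" using na q2I by simp
      have j2: "j + 2 \<le> n" using j n4 by arith
      show False using key[OF dq2(1) dq2(2) j3 j2 M xM bM xb aX aM I1' I2' na'] .
    qed
    thus ?thesis using j3 by simp
  qed
  define h where "h = (\<lambda>(i::nat,j::nat). if 1 \<le> i then (i,j)
                         else if \<not> isInt q (L (j-1) (n-1)) then (j-1, n-1) else (1, j))"
  have hT: "h ` U \<subseteq> T"
  proof
    fix v assume "v \<in> h ` U"
    then obtain i j where ij: "(i,j) \<in> U" "v = h (i,j)" by auto
    have b: "i+2 \<le> j" "j \<le> n-1" "j - i \<le> n-2" using ij(1) unfolding U_def by auto
    show "v \<in> T"
    proof (cases "1 \<le> i")
      case True thus ?thesis using ij b unfolding h_def T_def by simp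
    next
      case False
      hence i0: "i = 0" by simp
      show ?thesis
      proof (cases "isInt q (L (j-1) (n-1))")
        case True
        hence "3 \<le> j" using F ij(1) i0 by blast
        thus ?thesis using ij b i0 True unfolding h_def T_def by simp
      next
        case False
        have v: "v = (j-1, n-1)" using ij(2) i0 False unfolding h_def by simp
        have "1 \<le> j - 1" "(j-1) + 2 \<le> n - 1" using b i0 n4 by linarith+
        thus ?thesis unfolding v T_def by simp
      qed
    qed
  qed
  have Ub: "i+2 \<le> j \<and> j \<le> n-1 \<and> j - i \<le> n-2 \<and> isInt q (L i j)" if "(i,j) \<in> U" for i j
    using that unfolding U_def by simp
  have P1: "isInt q (L (fst (h (i,j))) (snd (h (i,j))))" if "(i,j) \<in> U" "1 \<le> i" for i j
  proof -
    have "h (i,j) = (i,j)" using that(2) unfolding h_def by simp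
    thus ?thesis using Ub[OF that(1)] by simp
  qed
  have P2: "\<not> isInt q (L (fst (h (0,j))) (snd (h (0,j))))" if "(0,j) \<in> U" for j
  proof (cases "isInt q (L (j-1) (n-1))")
    case True
    have "h (0,j) = (1,j)" using True unfolding h_def by simp
    thus ?thesis using F[OF that True] by simp
  next
    case False
    have "h (0,j) = (j-1,n-1)" using False unfolding h_def by simp
    thus ?thesis using False by simp
  qed
  have P3: "h (0,j) = h (0,j') \<Longrightarrow> (0,j) \<in> U \<Longrightarrow> (0,j') \<in> U \<Longrightarrow> j = j'" for j j'
  proof -
    assume e: "h (0,j) = h (0,j')" and u1: "(0,j) \<in> U" and u2: "(0,j') \<in> U"
    have b1: "2 \<le> j" "j \<le> n - 2" using Ub[OF u1] by auto
    have b2: "2 \<le> j'" "j' \<le> n - 2" using Ub[OF u2] by auto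
    have hj: "h (0,j) = (if \<not> isInt q (L (j-1) (n-1)) then (j-1, n-1) else (1,j))" for j
      unfolding h_def by simp
    show "j = j'"
    proof (cases "isInt q (L (j-1) (n-1))")
      case True
      show ?thesis
      proof (cases "isInt q (L (j'-1) (n-1))")
        case True2: True
        thus ?thesis using e True hj[of j] hj[of j'] by simp
      next
        case False2: False
        have "(1::nat, j) = (j'-1, n-1)" using e True False2 hj[of j] hj[of j'] by simp
        hence "j = n - 1" by simp
        thus ?thesis using b1 n4 by linarith
      qed
    next
      case False
      show ?thesis
      proof (cases "isInt q (L (j'-1) (n-1))")
        case True2: True
        have "(j-1, n-1) = (1::nat, j')" using e False True2 hj[of j] hj[of j'] by simp
        hence "j' = n - 1" by simp
        thus ?thesis using b2 n4 by linarith
      next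
        case False2: False
        have "(j-1, n-1) = (j'-1, n-1::nat)" using e False False2 hj[of j] hj[of j'] by simp
        hence "j - 1 = j' - 1" by simp
        thus ?thesis using b1 b2 by linarith
      qed
    qed
  qed
  have inj: "inj_on h U"
  proof
    fix u v assume uv: "u \<in> U" "v \<in> U" "h u = h v"
    obtain i j where u: "u = (i,j)" by (metis surj_pair)
    obtain i' j' where v: "v = (i',j')" by (metis surj_pair)
    show "u = v"
    proof (cases "1 \<le> i")
      case True
      show ?thesis
      proof (cases "1 \<le> i'")
        case True2: True
        have hu: "h u = u" "h v = v" using True True2 u v unfolding h_def by simp_all
        show ?thesis using uv(3) hu by metis
      next
        case False2: False
        hence "i' = 0" by simp
        have "isInt q (L (fst (h u)) (snd (h u)))" using P1[of i j] uv(1) u True by simp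
        moreover have "\<not> isInt q (L (fst (h v)) (snd (h v)))" using P2[of j'] uv(2) v \<open>i' = 0\<close> by simp
        ultimately show ?thesis using uv(3) by simp
      qed
    next
      case False
      hence "i = 0" by simp
      show ?thesis
      proof (cases "1 \<le> i'")
        case True2: True
        have "isInt q (L (fst (h v)) (snd (h v)))" using P1[of i' j'] uv(2) v True2 by simp
        moreover have "\<not> isInt q (L (fst (h u)) (snd (h u)))" using P2[of j] uv(1) u \<open>i = 0\<close> by simp
        ultimately show ?thesis using uv(3) by simp
      next
        case False2: False
        hence "i' = 0" by simp
        have "j = j'" using P3[of j j'] uv u v \<open>i = 0\<close> \<open>i' = 0\<close> by simp
        thus ?thesis using u v \<open>i = 0\<close> \<open>i' = 0\<close> by simp
      qed
    qed
  qed
  have c2: "card U \<le> card T" using card_inj_on_le[OF inj hT finT] .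
  have c3: "2 * card T = (n - 3) * (n - 2)"
  proof -
    have "2 * card T = (n - 1 - 2) * (n - 1 - 1)" unfolding T_def by (rule cardT)
    thus ?thesis by (simp add: numeral_eq_Suc)
  qed
  have "2 * card CS \<le> (n - 3) * (n - 2)" using c1 c2 c3 by linarith
  thus ?thesis unfolding CS_def n_def .
qed


end
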